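(* Let $S=\langle P,\varphi\rangle$ be a SUT model, $t$ a strength and $N\ge1$ an integer. The optimal cost of the Partial MaxSAT instance $TPMSat_{CX}^{N,t,S}$ (defined in the context) is $|\mathcal T_a|-T(N;t,S)$.
   Context: A SUT model is $S=\langle P,\varphi\rangle$, where $P$ is a finite set of parameters, each $p\in P$ having a finite nonempty domain $d(p)$, and $\varphi$ is a propositional formula whose atoms have the form $(p=v)$ with $p\in P$, $v\in d(p)$. A test case is a full assignment $A$ giving each $p$ a value in $d(p)$ such that $\varphi$ is true when each atom $(p=v)$ is read as true iff $A(p)=v$; it is assumed that at least one test case exists. Fix a strength $t$ with $1\le t\le|P|$. A $t$-tuple is an assignment of values to exactly $t$ distinct parameters, viewed as a set of pairs $(p,v)$; a test case covers $\tau$ if it assigns $v$ to $p$ for every $(p,v)\in\tau$. A $t$-tuple is allowed if some test case covers it; $\mathcal T_a$ is the set of allowed $t$-tuples. The Tuple Number $T(N;t,S)$ is the maximum number of $t$-tuples covered (each by at least one member) by a list of $N$ test cases. $[N]=\{1,\dots,N\}$. A Partial MaxSAT instance consists of hard constraints and soft clauses $(c,w)$ with positive integer weights; its optimal cost is the minimum, over truth assignments satisfying all hard constraints, of the total weight of falsified soft clauses ($\infty$ if the hard constraints are unsatisfiable). Variables: $x_{i,p,v}$ ($i\in[N]$, $p\in P$, $v\in d(p)$), $c^i_\tau$ and $c_\tau$ ($i\in[N]$, $\tau\in\mathcal T_a$). Hard constraints of $TPMSat_{CX}^{N,t,S}$: (X) for every $i\in[N]$, $p\in P$: exactly one of $\{x_{i,p,v}:v\in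 d(p)\}$ is true; (SUTX) for every $i\in[N]$: the formula obtained from $\varphi$ by replacing each atom $(p=v)$ with $x_{i,p,v}$; (CX) for every $i\in[N]$, $\tau\in\mathcal T_a$, $(p,v)\in\tau$: $c^i_\tau\rightarrow x_{i,p,v}$; (RC) for every $\tau\in\mathcal T_a$: $c_\tau\leftrightarrow\bigvee_{i\in[N]}c^i_\tau$. Soft clauses (SoftC): $(c_\tau,1)$ for every $\tau\in\mathcal T_a$. *)

theory Defs
  imports Main "HOL-Library.Multiset" "HOL-Library.Extended_Nat"
begin

datatype 'a form =
    Atom 'a
  | FTrue
  | FFalse
  | Neg "'a form"
  | Conj "'a form" "'a form"
  | Disj "'a form" "'a form"
  | Imp "'a form" "'a form"
  | Iff "'a form" "'a form"
  | BigAnd "'a form list"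
  | BigOr "'a form list"

fun eval :: "('a \<Rightarrow> bool) \<Rightarrow> 'a form \<Rightarrow> bool" where
  "eval I (Atom a) = I a"
| "eval I FTrue = True"
| "eval I FFalse = False"
| "eval I (Neg f) = (\<not> eval I f)"
| "eval I (Conj f g) = (eval I f \<and> eval I g)"
| "eval I (Disj f g) = (eval I f \<or> eval I g)"
| "eval I (Imp f g) = (eval I f \<longrightarrow> eval I g)"
| "eval I (Iff f g) = (eval I f \<longleftrightarrow> eval I g)"
| "eval I (BigAnd fs) = (\<forall>f\<in>set fs. eval I f)"
| "eval I (BigOr fs) = (\<exists>f\<in>set fs. eval I f)"

definition list_of_set :: "'a set \<Rightarrow> 'a list" where
  "list_of_set S = (SOME xs. distinct xs \<and> set xs = S)"

definition exactly_one :: "'a set \<Rightarrow> 'a form" where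
  "exactly_one S = BigOr (map (\<lambda>a. Conj (Atom a)
      (BigAnd (map (\<lambda>b. Neg (Atom b)) (list_of_set (S - {a}))))) (list_of_set S))"

text \<open>Optimal cost: minimum over assignments satisfying all hard
  constraints of the total weight of falsified soft clauses; \<infinity> if none exists
  (Inf of the empty set of enat).\<close>
definition opt_cost :: "'x form set \<Rightarrow> ('x form \<times> nat) multiset \<Rightarrow> enat" where
  "opt_cost H S = Inf {enat (sum_mset (image_mset snd (filter_mset (\<lambda>(c,w). \<not> eval I c) S)))
                       | I. \<forall>h\<in>H. eval I h}"

definition sut_model :: "'p set \<Rightarrow> ('p \<Rightarrow> 'v set) \<Rightarrow> ('p \<times> 'v) form \<Rightarrow> bool" where
  "sut_model P d \<phi> \<longleftrightarrow> finite P \<and> (\<forall>p\<in>P. finite (d p) \<and> d p \<noteq> {})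
     \<and> (\<forall>(p,v)\<in>set_form \<phi>. p \<in> P \<and> v \<in> d p)"

definition test_case :: "'p set \<Rightarrow> ('p \<Rightarrow> 'v set) \<Rightarrow> ('p \<times> 'v) form \<Rightarrow> ('p \<Rightarrow> 'v) \<Rightarrow> bool" where
  "test_case P d \<phi> A \<longleftrightarrow> (\<forall>p\<in>P. A p \<in> d p) \<and> eval (\<lambda>(p,v). A p = v) \<phi>"

text \<open>A t-tuple: an assignment of values to exactly t distinct parameters, as a set of pairs.\<close>
definition t_tuple :: "'p set \<Rightarrow> ('p \<Rightarrow> 'v set) \<Rightarrow> nat \<Rightarrow> ('p \<times> 'v) set \<Rightarrow> bool" where
  "t_tuple P d t \<tau> \<longleftrightarrow> \<tau> \<subseteq> {(p,v). p \<in> P \<and> v \<in> d p} \<and> finite \<tau> \<and> card \<tau> = t \<and> inj_on fst \<tau>"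

definition covers :: "('p \<Rightarrow> 'v) \<Rightarrow> ('p \<times> 'v) set \<Rightarrow> bool" where
  "covers A \<tau> \<longleftrightarrow> (\<forall>(p,v)\<in>\<tau>. A p = v)"

definition allowed_tuples :: "'p set \<Rightarrow> ('p \<Rightarrow> 'v set) \<Rightarrow> ('p \<times> 'v) form \<Rightarrow> nat \<Rightarrow> ('p \<times> 'v) set set" where
  "allowed_tuples P d \<phi> t = {\<tau>. t_tuple P d t \<tau> \<and> (\<exists>A. test_case P d \<phi> A \<and> covers A \<tau>)}"

definition covered_tuples :: "'p set \<Rightarrow> ('p \<Rightarrow> 'v set) \<Rightarrow> nat \<Rightarrow> ('p \<Rightarrow> 'v) list \<Rightarrow> ('p \<times> 'v) set set" where
  "covered_tuples P d t L = {\<tau>. t_tuple P d t \<tau> \<and> (\<exists>A\<in>set L. covers A \<tau>)}"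

definition tuple_number :: "nat \<Rightarrow> nat \<Rightarrow> 'p set \<Rightarrow> ('p \<Rightarrow> 'v set) \<Rightarrow> ('p \<times> 'v) form \<Rightarrow> nat" where
  "tuple_number N t P d \<phi> = Max {card (covered_tuples P d t L) | L.
       length L = N \<and> (\<forall>A\<in>set L. test_case P d \<phi> A)}"

datatype ('p,'v) mvar =
    XVar nat 'p 'v
  | CIVar nat "('p \<times> 'v) set"
  | CVar "('p \<times> 'v) set"

definition hard_X :: "nat \<Rightarrow> 'p set \<Rightarrow> ('p \<Rightarrow> 'v set) \<Rightarrow> ('p,'v) mvar form set" where
  "hard_X N P d = {exactly_one {XVar i p v | v. v \<in> d p} | i p. i \<in> {1..N} \<and> p \<in> P}"

definition hard_SUTX :: "nat \<Rightarrow> ('p \<times> 'v) form \<Rightarrow> ('p,'v) mvar form set" where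
  "hard_SUTX N \<phi> = {map_form (\<lambda>(p,v). XVar i p v) \<phi> | i. i \<in> {1..N}}"

definition hard_CX :: "nat \<Rightarrow> ('p \<times> 'v) set set \<Rightarrow> ('p,'v) mvar form set" where
  "hard_CX N Ta = {Imp (Atom (CIVar i \<tau>)) (Atom (XVar i p v)) | i \<tau> p v.
                     i \<in> {1..N} \<and> \<tau> \<in> Ta \<and> (p,v) \<in> \<tau>}"

definition hard_RC :: "nat \<Rightarrow> ('p \<times> 'v) set set \<Rightarrow> ('p,'v) mvar form set" where
  "hard_RC N Ta = {Iff (Atom (CVar \<tau>)) (BigOr (map (\<lambda>i. Atom (CIVar i \<tau>)) [1..<N+1])) | \<tau>. \<tau> \<in> Ta}"

definition TPMSat_CX_hard :: "nat \<Rightarrow> nat \<Rightarrow> 'p set \<Rightarrow> ('p \<Rightarrow> 'v set) \<Rightarrow> ('p \<times> 'v) form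
    \<Rightarrow> ('p,'v) mvar form set" where
  "TPMSat_CX_hard N t P d \<phi> =
     (let Ta = allowed_tuples P d \<phi> t in
      hard_X N P d \<union> hard_SUTX N \<phi> \<union> hard_CX N Ta \<union> hard_RC N Ta)"

definition TPMSat_CX_soft :: "nat \<Rightarrow> nat \<Rightarrow> 'p set \<Rightarrow> ('p \<Rightarrow> 'v set) \<Rightarrow> ('p \<times> 'v) form
    \<Rightarrow> (('p,'v) mvar form \<times> nat) multiset" where
  "TPMSat_CX_soft N t P d \<phi> = image_mset (\<lambda>\<tau>. (Atom (CVar \<tau>), 1)) (mset_set (allowed_tuples P d \<phi> t))"

end

theory Submission
  imports Defs
begin

lemma eval_cong: "(\<forall>x\<in>set_form f. I x = J x) \<Longrightarrow> eval I f = eval J f"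
  by (induction f) auto

lemma eval_map: "eval I (map_form g f) = eval (I \<circ> g) f"
  by (induction f) auto

lemma list_of_set_props: "finite S \<Longrightarrow> distinct (list_of_set S) \<and> set (list_of_set S) = S"
  unfolding list_of_set_def by (rule someI_ex) (use finite_distinct_list in blast)

lemma eval_exactly_one: "finite S \<Longrightarrow>
  eval I (exactly_one S) = (\<exists>a\<in>S. I a \<and> (\<forall>b\<in>S-{a}. \<not> I b))"
  unfolding exactly_one_def using list_of_set_props[of S] list_of_set_props[of "S - {a}" for a]
  by auto

lemma soft_cost: "finite Ta \<Longrightarrow>
  sum_mset (image_mset snd (filter_mset (\<lambda>(c,w). \<not> eval I c)
     (image_mset (\<lambda>\<tau>. (Atom (CVar \<tau>), 1::nat)) (mset_set Ta)))) = card {\<tau>\<in>Ta. \<not> I (CVar \<tau>)}"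
proof (induction Ta rule: finite_induct)
  case empty
  then show ?case by simp
next
  case (insert x F)
  have "{\<tau>\<in>insert x F. \<not> I (CVar \<tau>)} = (if I (CVar x) then {\<tau>\<in>F. \<not> I (CVar \<tau>)}
     else insert x {\<tau>\<in>F. \<not> I (CVar \<tau>)})" by auto
  then show ?case using insert by auto
qed

lemma finite_Ta: "sut_model P d \<phi> \<Longrightarrow> finite (allowed_tuples P d \<phi> t)"
proof -
  assume s: "sut_model P d \<phi>"
  have "finite (Sigma P d)" using s unfolding sut_model_def by auto
  moreover have "allowed_tuples P d \<phi> t \<subseteq> Pow (Sigma P d)"
    unfolding allowed_tuples_def t_tuple_def by auto
  ultimately show ?thesis by (meson finite_Pow_iff finite_subset)
qed

lemma covered_sub: "\<forall>A\<in>set L. test_case P d \<phi> A \<Longrightarrow> covered_tuples P d t L \<subseteq> allowed_tuples P d \<phi> t"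
  unfolding covered_tuples_def allowed_tuples_def by auto

theorem proposition9:
  fixes P :: "'p set" and d :: "'p \<Rightarrow> 'v set" and \<phi> :: "('p \<times> 'v) form"
    and t N :: nat
  assumes "sut_model P d \<phi>"
    and "\<exists>A. test_case P d \<phi> A"
    and "1 \<le> t" and "t \<le> card P"
    and "N \<ge> 1"
  shows "opt_cost (TPMSat_CX_hard N t P d \<phi>) (TPMSat_CX_soft N t P d \<phi>)
         = enat (card (allowed_tuples P d \<phi> t) - tuple_number N t P d \<phi>)"
proof -
  define Ta where "Ta = allowed_tuples P d \<phi> t"
  have finTa: "finite Ta" using finite_Ta[OF assms(1)] Ta_def by simp
  define CS where "CS = {card (covered_tuples P d t L) | L.
       length L = N \<and> (\<forall>A\<in>set L. test_case P d \<phi> A)}"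
  have T_def: "tuple_number N t P d \<phi> = Max CS" unfolding tuple_number_def CS_def by simp
  have CS_bound: "CS \<subseteq> {..card Ta}"
    unfolding CS_def Ta_def using covered_sub finite_Ta[OF assms(1)]
    by (auto intro!: card_mono) blast
  have finCS: "finite CS" using CS_bound finite_subset by blast
  obtain A0 where A0: "test_case P d \<phi> A0" using assms(2) by blast
  have neCS: "CS \<noteq> {}" unfolding CS_def
    using A0 by (auto intro!: exI[of _ "replicate N A0"])
  have pin: "p \<in> P \<and> v \<in> d p" if "(p,v) \<in> set_form \<phi>" for p v
    using assms(1) that unfolding sut_model_def by auto
  have dfin: "finite (d p)" if "p \<in> P" for p using assms(1) that unfolding sut_model_def by auto
  have finX: "finite {XVar i p v | v. v \<in> d p}" if "p \<in> P" for i p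
  proof -
    have "{XVar i p v | v. v \<in> d p} = XVar i p ` d p" by auto
    then show ?thesis using dfin[OF that] by simp
  qed
  define cost where "cost I = sum_mset (image_mset snd (filter_mset (\<lambda>(c,w). \<not> eval I c)
     (TPMSat_CX_soft N t P d \<phi>)))" for I :: "('p,'v) mvar \<Rightarrow> bool"
  have cost_eq: "cost I = card {\<tau>\<in>Ta. \<not> I (CVar \<tau>)}" for I
    unfolding cost_def TPMSat_CX_soft_def Ta_def[symmetric] using soft_cost[OF finTa] by simp
  define H where "H = TPMSat_CX_hard N t P d \<phi>"
  define S where "S = {enat (cost I) | I. \<forall>h\<in>H. eval I h}"
  have oc: "opt_cost H (TPMSat_CX_soft N t P d \<phi>) = Inf S"
    unfolding opt_cost_def S_def cost_def by simp
  let ?val = "card Ta - Max CS"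
  have lower: "enat ?val \<le> y" if "y \<in> S" for y
  proof -
    obtain I where yI: "y = enat (cost I)" and hI: "\<forall>h\<in>H. eval I h" using \<open>y \<in> S\<close> S_def by auto
    define A where "A i p = (THE v. v \<in> d p \<and> I (XVar i p v))" for i p
    have uniq: "\<exists>!v. v \<in> d p \<and> I (XVar i p v)" if "p \<in> P" "i \<in> {1..N}" for i p
    proof -
      have "exactly_one {XVar i p v | v. v \<in> d p} \<in> H"
        unfolding H_def TPMSat_CX_hard_def Let_def hard_X_def using that by auto
      then have "eval I (exactly_one {XVar i p v | v. v \<in> d p})" using hI by blast
      then show ?thesis unfolding eval_exactly_one[OF finX[OF that(1)]] by auto
    qed
    have Aiff: "I (XVar i p v) = (A i p = v)" "A i p \<in> d p"
      if "p \<in> P" "i \<in> {1..N}" "v \<in> d p" for i p v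
      using theI'[OF uniq[OF that(1,2)]] uniq[OF that(1,2)] that(3) unfolding A_def by auto
    have Ain: "A i p \<in> d p" if "p \<in> P" "i \<in> {1..N}" for i p
      using theI'[OF uniq[OF that(1,2)]] unfolding A_def by blast
    define L where "L = map A [1..<N+1]"
    have tc: "test_case P d \<phi> (A i)" if "i \<in> {1..N}" for i
    proof -
      have "map_form (\<lambda>(p,v). XVar i p v) \<phi> \<in> H"
        unfolding H_def TPMSat_CX_hard_def Let_def hard_SUTX_def using that by auto
      then have "eval I (map_form (\<lambda>(p,v). XVar i p v) \<phi>)" using hI by blast
      then have e: "eval (\<lambda>(p,v). I (XVar i p v)) \<phi>" by (simp add: eval_map comp_def split_beta')
      have "eval (\<lambda>(p,v). I (XVar i p v)) \<phi> = eval (\<lambda>(p,v). A i p = v) \<phi>"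
        by (rule eval_cong) (use that in \<open>force dest!: pin simp: Aiff(1)\<close>)
      then show ?thesis unfolding test_case_def using e Ain that by auto
    qed
    have Lok: "length L = N" "\<forall>A\<in>set L. test_case P d \<phi> A"
      unfolding L_def using tc by auto
    then have inCS: "card (covered_tuples P d t L) \<in> CS" unfolding CS_def by blast
    have Csub: "{\<tau>\<in>Ta. I (CVar \<tau>)} \<subseteq> covered_tuples P d t L"
    proof
      fix \<tau> assume a: "\<tau> \<in> {\<tau>\<in>Ta. I (CVar \<tau>)}"
      then have "Iff (Atom (CVar \<tau>)) (BigOr (map (\<lambda>i. Atom (CIVar i \<tau>)) [1..<N+1])) \<in> H"
        unfolding H_def TPMSat_CX_hard_def Let_def hard_RC_def Ta_def by auto
      then obtain i where i: "i \<in> {1..N}" "I (CIVar i \<tau>)" using hI a by fastforce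
      have tt: "t_tuple P d t \<tau>" using a unfolding Ta_def allowed_tuples_def by auto
      have "I (XVar i p v)" if "(p,v) \<in> \<tau>" for p v
      proof -
        have "Imp (Atom (CIVar i \<tau>)) (Atom (XVar i p v)) \<in> H"
          unfolding H_def TPMSat_CX_hard_def Let_def hard_CX_def Ta_def[symmetric] using a i that by blast
        then show ?thesis using hI i by fastforce
      qed
      then have "covers (A i) \<tau>" unfolding covers_def using tt Aiff i
        unfolding t_tuple_def by fastforce
      moreover have "A i \<in> set L" unfolding L_def set_map using i by (intro imageI) auto
      ultimately show "\<tau> \<in> covered_tuples P d t L" unfolding covered_tuples_def using tt by blast
    qed
    have "finite (covered_tuples P d t L)"
      using covered_sub[OF Lok(2)] finite_Ta[OF assms(1)] by (rule finite_subset)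
    then have "card {\<tau>\<in>Ta. I (CVar \<tau>)} \<le> card (covered_tuples P d t L)"
      using Csub by (rule card_mono)
    also have "\<dots> \<le> Max CS" using Max_ge[OF finCS inCS] .
    finally have "card {\<tau>\<in>Ta. I (CVar \<tau>)} \<le> Max CS" .
    moreover have "{\<tau>\<in>Ta. \<not> I (CVar \<tau>)} = Ta - {\<tau>\<in>Ta. I (CVar \<tau>)}" by auto
    ultimately have "?val \<le> cost I" unfolding cost_eq
      using finTa by (simp add: card_Diff_subset finite_subset)
    then show ?thesis using yI by simp
  qed
  have "Max CS \<in> CS" using Max_in[OF finCS neCS] .
  then obtain L where Lok: "length L = N" "\<forall>A\<in>set L. test_case P d \<phi> A"
    and LM: "Max CS = card (covered_tuples P d t L)" unfolding CS_def by auto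
  define I where "I x = (case x of XVar i p v \<Rightarrow> (L!(i-1)) p = v
     | CIVar i \<tau> \<Rightarrow> i \<in> {1..N} \<and> covers (L!(i-1)) \<tau>
     | CVar \<tau> \<Rightarrow> (\<exists>i\<in>{1..N}. covers (L!(i-1)) \<tau>))" for x
  have Ltc: "test_case P d \<phi> (L!(i-1))" if "i \<in> {1..N}" for i
  proof -
    have "L!(i-1) \<in> set L" using that Lok(1) by (intro nth_mem) auto
    then show ?thesis using Lok(2) by blast
  qed
  have hI: "\<forall>h\<in>H. eval I h"
  proof
    fix h assume "h \<in> H"
    then consider (X) i p where "i \<in> {1..N}" "p \<in> P" "h = exactly_one {XVar i p v | v. v \<in> d p}"
      | (SUT) i where "i \<in> {1..N}" "h = map_form (\<lambda>(p,v). XVar i p v) \<phi>"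
      | (CX) i \<tau> p v where "i \<in> {1..N}" "\<tau> \<in> Ta" "(p,v) \<in> \<tau>" "h = Imp (Atom (CIVar i \<tau>)) (Atom (XVar i p v))"
      | (RC) \<tau> where "\<tau> \<in> Ta" "h = Iff (Atom (CVar \<tau>)) (BigOr (map (\<lambda>i. Atom (CIVar i \<tau>)) [1..<N+1]))"
      unfolding H_def TPMSat_CX_hard_def Let_def hard_X_def hard_SUTX_def hard_CX_def hard_RC_def Ta_def
        Let_def by blast
    then show "eval I h"
    proof cases
      case X
      have "(L!(i-1)) p \<in> d p" using Ltc[OF X(1)] X(2) unfolding test_case_def by auto
      then show ?thesis unfolding X(3) eval_exactly_one[OF finX[OF X(2)]] I_def by auto
    next
      case SUT
      have "eval (\<lambda>(p,v). (L!(i-1)) p = v) \<phi>" using Ltc[OF SUT(1)] unfolding test_case_def by auto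
      then show ?thesis unfolding SUT(2) eval_map I_def by (simp add: comp_def split_beta')
    next
      case CX
      then show ?thesis unfolding I_def covers_def by auto
    next
      case RC
      then show ?thesis unfolding I_def by auto
    qed
  qed
  have "{\<tau>\<in>Ta. \<not> I (CVar \<tau>)} = Ta - covered_tuples P d t L"
  proof -
    have "covered_tuples P d t L \<subseteq> Ta" using covered_sub[OF Lok(2)] Ta_def by simp
    moreover have "\<tau> \<in> covered_tuples P d t L \<longleftrightarrow> I (CVar \<tau>)" if "\<tau> \<in> Ta" for \<tau>
    proof -
      have tt: "t_tuple P d t \<tau>" using that unfolding Ta_def allowed_tuples_def by auto
      have "(\<exists>A\<in>set L. covers A \<tau>) \<longleftrightarrow> (\<exists>i\<in>{1..N}. covers (L!(i-1)) \<tau>)"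
      proof
        assume "\<exists>A\<in>set L. covers A \<tau>"
        then obtain j where "j < N" "covers (L!j) \<tau>" using Lok(1) by (auto simp: in_set_conv_nth)
        then show "\<exists>i\<in>{1..N}. covers (L!(i-1)) \<tau>" by (intro bexI[of _ "Suc j"]) auto
      next
        assume "\<exists>i\<in>{1..N}. covers (L!(i-1)) \<tau>"
        then obtain i where "i \<in> {1..N}" "covers (L!(i-1)) \<tau>" by blast
        then show "\<exists>A\<in>set L. covers A \<tau>" using Lok(1)
          by (intro bexI[of _ "L!(i-1)"]) auto
      qed
      then show ?thesis unfolding covered_tuples_def I_def using tt by auto
    qed
    ultimately show ?thesis by auto
  qed
  moreover have csT: "covered_tuples P d t L \<subseteq> Ta" using covered_sub[OF Lok(2)] Ta_def by simp
  moreover have "finite (covered_tuples P d t L)" using finTa csT by (rule finite_subset[rotated])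
  ultimately have "cost I = ?val" unfolding cost_eq LM
    by (simp add: card_Diff_subset)
  moreover have "enat (cost I) \<in> S" unfolding S_def using hI by blast
  ultimately have inS: "enat ?val \<in> S" by simp
  have "Inf S = enat ?val"
    using Inf_lower[OF inS] Inf_greatest[of S "enat ?val"] lower by (simp add: antisym)
  then show ?thesis using oc unfolding H_def T_def Ta_def by simp
qed

end
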